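(* Let $p,q\ge1$, $J\subseteq[p-1]$, $K\subseteq[q-1]$ and $R\subseteq[p+q-1]$. For $\zeta\in\mathfrak{S}^{(p,q)}$ define $r_\zeta\colon\mathcal{Q}_p\times\mathcal{Q}_q\to\mathcal{Q}_{p+q}$ by $r_\zeta(J',K')=\mathrm{Des}\big((\zeta_{J'}\times\zeta_{K'})\cdot\zeta^{-1}\big)$. Then the coefficient of $M_{R,p+q}$ in the product $M_{J,p}\cdot M_{K,q}$ equals the number of $\zeta\in\mathfrak{S}^{(p,q)}$ such that the set $\{(J',K')\in\mathcal{Q}_p\times\mathcal{Q}_q: r_\zeta(J',K')\subseteq R\}$ has a greatest element with respect to componentwise inclusion and this greatest element is $(J,K)$.
   Context: $\mathcal{Q}_n$ denotes the set of subsets of $[n-1]$ ordered by inclusion. Permutations in one-line notation, product is composition. $\mathrm{Des}(x)=\{i:x_i>x_{i+1}\}$. For $x\in\mathfrak{S}_p,y\in\mathfrak{S}_q$, $x\times y\in\mathfrak{S}_{p+q}$ has $(x\times y)(i)=x_i$ ($i\le p$), $(x\times y)(p+j)=p+y_j$. $\mathfrak{S}^{(p,q)}=\{\zeta\in\mathfrak{S}_{p+q}:\zeta_1<\cdots<\zeta_p,\zeta_{p+1}<\cdots<\zeta_{p+q}\}$. For $J=\{p_1<\cdots<p_k\}\subseteq[n-1]$, $\zeta_J=(n{-}p_1{+}1,\ldots,n,\ n{-}p_2{+}1,\ldots,n{-}p_1,\ldots,1,\ldots,n{-}p_k)\in\mathfrak{S}_n$, $\zeta_\emptyset=1_n$.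 For $J=\{j_1<\cdots<j_{k-1}\}\subseteq[n-1]$ with composition $\alpha=(j_1,j_2-j_1,\ldots,n-j_{k-1})$, $M_{J,n}=\sum_{i_1<\cdots<i_k}x_{i_1}^{\alpha_1}\cdots x_{i_k}^{\alpha_k}$ is the monomial quasi-symmetric function (commuting variables $x_1,x_2,\ldots$); products are products of formal power series. *)

theory Defs
  imports "HOL-Combinatorics.Permutations"
begin

text \<open>Permutations of [n] are functions nat \<Rightarrow> nat with \<open>\<sigma> permutes {1..n}\<close>
  (identity outside {1..n}); one-line notation x_i = x i; product is composition.\<close>

definition Des :: "nat \<Rightarrow> (nat \<Rightarrow> nat) \<Rightarrow> nat set" where
  "Des n x = {i \<in> {1..<n}. x i > x (Suc i)}"

definition cross :: "nat \<Rightarrow> (nat \<Rightarrow> nat) \<Rightarrow> (nat \<Rightarrow> nat) \<Rightarrow> nat \<Rightarrow> nat" where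
  "cross p x y = (\<lambda>i. if i \<le> p then x i else p + y (i - p))"

definition shuffles :: "nat \<Rightarrow> nat \<Rightarrow> (nat \<Rightarrow> nat) set" where
  "shuffles p q = {\<zeta>. \<zeta> permutes {1..p+q}
      \<and> (\<forall>i j. 1 \<le> i \<and> i < j \<and> j \<le> p \<longrightarrow> \<zeta> i < \<zeta> j)
      \<and> (\<forall>i j. p < i \<and> i < j \<and> j \<le> p + q \<longrightarrow> \<zeta> i < \<zeta> j)}"

text \<open>zeta_J in S_n: position i in the block (p_{t-1}, p_t] gets value n - p_t + (i - p_{t-1}),
  with p_0 = 0 and p_{k+1} = n.\<close>
definition zetaJ :: "nat \<Rightarrow> nat set \<Rightarrow> nat \<Rightarrow> nat" where
  "zetaJ n J = (\<lambda>i. if 1 \<le> i \<and> i \<le> n then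
       (let a = Max (insert 0 {j \<in> J. j < i}); b = Min (insert n {j \<in> J. i \<le> j})
        in n - b + (i - a))
     else i)"

definition r_map :: "nat \<Rightarrow> nat \<Rightarrow> (nat \<Rightarrow> nat) \<Rightarrow> nat set \<Rightarrow> nat set \<Rightarrow> nat set" where
  "r_map p q \<zeta> J' K' = Des (p + q) (cross p (zetaJ p J') (zetaJ q K') \<circ> inv \<zeta>)"

definition compo :: "nat \<Rightarrow> nat set \<Rightarrow> nat list" where
  "compo n J = (let L = 0 # sorted_list_of_set J @ [n] in map (\<lambda>(a, b). b - a) (zip L (tl L)))"

text \<open>Formal power series in commuting variables x_0, x_1, ... (a relabelling of x_1, x_2, ...):
  functions from exponent vectors (finitely supported nat \<Rightarrow> nat) to coefficients.\<close>
type_synonym fps_inf = "(nat \<Rightarrow> nat) \<Rightarrow> int"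

definition series_mult :: "fps_inf \<Rightarrow> fps_inf \<Rightarrow> fps_inf" where
  "series_mult f g e = (\<Sum>a \<in> {a. \<forall>i. a i \<le> e i}. f a * g (\<lambda>i. e i - a i))"

definition M :: "nat set \<Rightarrow> nat \<Rightarrow> fps_inf" where
  "M J n e = (if map e (sorted_list_of_set {i. e i \<noteq> 0}) = compo n J then 1 else 0)"

definition greatest_is :: "nat \<Rightarrow> nat \<Rightarrow> (nat \<Rightarrow> nat) \<Rightarrow> nat set \<Rightarrow> nat set \<Rightarrow> nat set \<Rightarrow> bool" where
  "greatest_is p q \<zeta> R J K =
     (let S = {(J', K'). J' \<subseteq> {1..<p} \<and> K' \<subseteq> {1..<q} \<and> r_map p q \<zeta> J' K' \<subseteq> R}
      in (J, K) \<in> S \<and> (\<forall>(J', K') \<in> S. J' \<subseteq> J \<and> K' \<subseteq> K))"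

end

theory Submission
  imports Defs
begin


definition cum :: "(nat \<Rightarrow> nat) \<Rightarrow> nat \<Rightarrow> nat" where
  "cum e i = (\<Sum>j<i. e j)"

lemma cum_0[simp]: "cum e 0 = 0" by (simp add: cum_def)
lemma cum_Suc[simp]: "cum e (Suc i) = cum e i + e i" by (simp add: cum_def)

lemma cum_mono: "i \<le> j \<Longrightarrow> cum e i \<le> cum e j"
  by (induction j) (auto simp: le_Suc_eq)

lemma block_exists: "1 \<le> m \<Longrightarrow> m \<le> cum e N \<Longrightarrow> \<exists>i<N. cum e i < m \<and> m \<le> cum e (Suc i)"
proof (induction N)
  case 0 then show ?case by simp
next
  case (Suc N)
  show ?case
  proof (cases "m \<le> cum e N")
    case True then show ?thesis using Suc by (meson less_SucI)
  next
    case False then show ?thesis using Suc.prems by auto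
  qed
qed

lemma block_unique:
  assumes "cum e i < m" "m \<le> cum e (Suc i)" "cum e j < m" "m \<le> cum e (Suc j)"
  shows "i = j"
proof (rule ccontr)
  assume "i \<noteq> j"
  then consider "Suc i \<le> j" | "Suc j \<le> i" by linarith
  then show False
  proof cases
    case 1 then have "cum e (Suc i) \<le> cum e j" by (rule cum_mono)
    then show False using assms by linarith
  next
    case 2 then have "cum e (Suc j) \<le> cum e i" by (rule cum_mono)
    then show False using assms by linarith
  qed
qed

definition Seg :: "(nat \<Rightarrow> nat) \<Rightarrow> (nat \<Rightarrow> nat) \<Rightarrow> (nat \<Rightarrow> nat) \<Rightarrow> nat set" where
  "Seg e lo hi = {m. \<exists>i. cum e i + lo i < m \<and> m \<le> cum e i + hi i}"

lemma seg_mem: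
  assumes "\<forall>j. hi j \<le> e j" "cum e i < m" "m \<le> cum e (Suc i)"
  shows "m \<in> Seg e lo hi \<longleftrightarrow> cum e i + lo i < m \<and> m \<le> cum e i + hi i"
proof
  assume "m \<in> Seg e lo hi"
  then obtain j where j: "cum e j + lo j < m" "m \<le> cum e j + hi j" unfolding Seg_def by auto
  have "hi j \<le> e j" using assms by auto
  then have "cum e j < m" "m \<le> cum e (Suc j)" using j by auto
  then have "j = i" using assms block_unique[of e j m i] by blast
  then show "cum e i + lo i < m \<and> m \<le> cum e i + hi i" using j by simp
qed (auto simp: Seg_def)

lemma seg_Int_Suc:
  assumes "\<forall>j. hi j \<le> e j"
  shows "Seg e lo hi \<inter> {1..cum e (Suc i)} = (Seg e lo hi \<inter> {1..cum e i}) \<union> {cum e i + lo i<..cum e i + hi i}"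
proof (intro set_eqI iffI)
  fix m assume m: "m \<in> Seg e lo hi \<inter> {1..cum e (Suc i)}"
  then obtain j where j: "cum e j + lo j < m" "m \<le> cum e j + hi j" unfolding Seg_def by auto
  have "j < i \<or> j = i \<or> Suc i \<le> j" by linarith
  moreover
  { assume "j < i" then have "cum e (Suc j) \<le> cum e i" by (intro cum_mono) simp
    moreover have "hi j \<le> e j" using assms by auto
    ultimately have "m \<in> Seg e lo hi \<inter> {1..cum e i}" using m j by auto }
  moreover
  { assume "Suc i \<le> j" then have "cum e (Suc i) \<le> cum e j" by (rule cum_mono)
    then have False using m j by auto }
  ultimately show "m \<in> (Seg e lo hi \<inter> {1..cum e i}) \<union> {cum e i + lo i<..cum e i + hi i}"
    using j by auto
next
  fix m assume "m \<in> (Seg e lo hi \<inter> {1..cum e i}) \<union> {cum e i + lo i<..cum e i + hi i}"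
  then show "m \<in> Seg e lo hi \<inter> {1..cum e (Suc i)}"
  proof
    assume "m \<in> Seg e lo hi \<inter> {1..cum e i}" then show ?thesis by auto
  next
    assume "m \<in> {cum e i + lo i<..cum e i + hi i}"
    then show ?thesis using assms[rule_format, of i] unfolding Seg_def by auto
  qed
qed

lemma finite_seg_Int: "finite (Seg e lo hi \<inter> {1..k})" by simp

lemma seg_card_cum:
  assumes "\<forall>j. hi j \<le> e j" "\<forall>j. lo j \<le> hi j"
  shows "card (Seg e lo hi \<inter> {1..cum e i}) = cum (\<lambda>j. hi j - lo j) i"
proof (induction i)
  case 0 then show ?case by simp
next
  case (Suc i)
  have d: "(Seg e lo hi \<inter> {1..cum e i}) \<inter> {cum e i + lo i<..cum e i + hi i} = {}" by auto
  show ?case unfolding seg_Int_Suc[OF assms(1)]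
    by (subst card_Un_disjoint[OF _ _ d]) (use Suc assms(2) in auto)
qed

lemma seg_card_m:
  assumes "\<forall>j. hi j \<le> e j" "\<forall>j. lo j \<le> hi j" "cum e i + lo i < m" "m \<le> cum e i + hi i"
  shows "card (Seg e lo hi \<inter> {1..m}) = cum (\<lambda>j. hi j - lo j) i + (m - cum e i - lo i)"
proof -
  have eq: "Seg e lo hi \<inter> {1..m} = (Seg e lo hi \<inter> {1..cum e i}) \<union> {cum e i + lo i<..m}"
  proof (intro set_eqI iffI)
    fix x assume x: "x \<in> Seg e lo hi \<inter> {1..m}"
    have "hi i \<le> e i" using assms(1) by auto
    then have "m \<le> cum e (Suc i)" using assms(4) by simp
    then have "x \<in> Seg e lo hi \<inter> {1..cum e (Suc i)}" using x by auto
    then show "x \<in> (Seg e lo hi \<inter> {1..cum e i}) \<union> {cum e i + lo i<..m}"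
      unfolding seg_Int_Suc[OF assms(1)] using x by auto
  next
    fix x assume "x \<in> (Seg e lo hi \<inter> {1..cum e i}) \<union> {cum e i + lo i<..m}"
    then show "x \<in> Seg e lo hi \<inter> {1..m}" using assms(3,4) unfolding Seg_def by auto
  qed
  have d: "(Seg e lo hi \<inter> {1..cum e i}) \<inter> {cum e i + lo i<..m} = {}" by auto
  show ?thesis unfolding eq
    by (subst card_Un_disjoint[OF _ _ d]) (use seg_card_cum[OF assms(1,2)] assms(3) in auto)
qed

definition Ps :: "(nat \<Rightarrow> nat) \<Rightarrow> nat set" where
  "Ps e = {cum e (Suc i) | i. e i \<noteq> 0}"

definition Qs :: "nat set \<Rightarrow> nat set \<Rightarrow> nat set" where
  "Qs R X = {card (X \<inter> {1..m}) | m. m \<in> X \<and> (m \<in> R \<or> Suc m \<notin> X)}"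

lemma Qs_seg:
  assumes hi: "\<forall>j. hi j \<le> e j" and lo: "\<forall>j. lo j \<le> hi j"
  shows "Qs (Ps e) (Seg e lo hi) = Ps (\<lambda>j. hi j - lo j)"
proof (intro set_eqI iffI)
  fix x assume "x \<in> Qs (Ps e) (Seg e lo hi)"
  then obtain m where x: "x = card (Seg e lo hi \<inter> {1..m})" and m: "m \<in> Seg e lo hi"
     and c: "m \<in> Ps e \<or> Suc m \<notin> Seg e lo hi" unfolding Qs_def by auto
  from m obtain i where i: "cum e i + lo i < m" "m \<le> cum e i + hi i" unfolding Seg_def by auto
  have x': "x = cum (\<lambda>j. hi j - lo j) i + (m - cum e i - lo i)" using x seg_card_m[OF hi lo i] by simp
  show "x \<in> Ps (\<lambda>j. hi j - lo j)"
  proof (cases "m = cum e i + hi i")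
    case True
    then show ?thesis using x' i unfolding Ps_def by (intro CollectI exI[of _ i]) auto
  next
    case False
    then have "Suc m \<in> Seg e lo hi" using i unfolding Seg_def by (intro CollectI exI[of _ i]) linarith
    with c have "m \<in> Ps e" by auto
    then obtain j where j: "m = cum e (Suc j)" "e j \<noteq> 0" unfolding Ps_def by auto
    have "hi i \<le> e i" using hi by auto
    then have "i = j" using i j by (intro block_unique[of e i m j]) auto
    then show ?thesis using j i False hi[rule_format, of i] by simp
  qed
next
  fix x assume "x \<in> Ps (\<lambda>j. hi j - lo j)"
  then obtain i where x: "x = cum (\<lambda>j. hi j - lo j) (Suc i)" and d: "lo i < hi i" unfolding Ps_def by auto
  define m where "m = cum e i + hi i"
  have mS: "m \<in> Seg e lo hi" using d unfolding Seg_def m_def by (intro CollectI exI[of _ i]) auto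
  have card: "card (Seg e lo hi \<inter> {1..m}) = x"
    using seg_card_m[OF hi lo, of i m] d x unfolding m_def by simp
  have "m \<in> Ps e \<or> Suc m \<notin> Seg e lo hi"
  proof (cases "hi i = e i")
    case True then show ?thesis using d unfolding Ps_def m_def by auto
  next
    case False
    then have "cum e i < Suc m" "Suc m \<le> cum e (Suc i)" using hi[rule_format, of i] unfolding m_def by auto
    then have "Suc m \<notin> Seg e lo hi" using seg_mem[OF hi, of i "Suc m" lo] unfolding m_def by auto
    then show ?thesis by simp
  qed
  then show "x \<in> Qs (Ps e) (Seg e lo hi)" unfolding Qs_def using mS card by blast
qed



lemma cum_in_Ps: "0 < cum e N \<Longrightarrow> cum e N \<in> Ps e"
proof (induction N)
  case 0 then show ?case by simp
next
  case (Suc N)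
  show ?case
  proof (cases "e N = 0")
    case True then show ?thesis using Suc by simp
  next
    case False then show ?thesis unfolding Ps_def by blast
  qed
qed

lemma cum_stable: "\<forall>i\<ge>N. e i = 0 \<Longrightarrow> N \<le> L \<Longrightarrow> cum e L = cum e N"
  by (induction L) (auto simp: le_Suc_eq)

lemma Ps_le: "\<forall>i\<ge>N. e i = 0 \<Longrightarrow> x \<in> Ps e \<Longrightarrow> 1 \<le> x \<and> x \<le> cum e N"
proof -
  assume z: "\<forall>i\<ge>N. e i = 0" and "x \<in> Ps e"
  then obtain i where i: "x = cum e (Suc i)" "e i \<noteq> 0" unfolding Ps_def by auto
  then have "Suc i \<le> N" using z by (meson not_less_eq_eq)
  then show ?thesis using i cum_mono[of "Suc i" N e] by simp
qed

lemma seg_sub: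
  assumes "\<forall>j. hi j \<le> e j" "\<forall>i\<ge>N. e i = 0"
  shows "Seg e lo hi \<subseteq> {1..cum e N}"
proof
  fix m assume "m \<in> Seg e lo hi"
  then obtain i where i: "cum e i + lo i < m" "m \<le> cum e i + hi i" unfolding Seg_def by auto
  have h: "hi i \<le> e i" using assms by auto
  then have "e i \<noteq> 0" using i by auto
  then have "Suc i \<le> N" using assms(2) by (meson not_less_eq_eq)
  then have "cum e (Suc i) \<le> cum e N" by (rule cum_mono)
  then show "m \<in> {1..cum e N}" using i h by auto
qed

lemma seg_cond:
  assumes "\<forall>j. a j \<le> e j" "1 \<le> m" "m \<notin> Seg e (\<lambda>_. 0) a" "Suc m \<in> Seg e (\<lambda>_. 0) a"
  shows "m \<in> Ps e"
proof -
  obtain i where i: "cum e i < Suc m" "Suc m \<le> cum e i + a i" using assms(4) unfolding Seg_def by auto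
  have "\<not> cum e i < m"
  proof
    assume "cum e i < m"
    then have "m \<in> Seg e (\<lambda>_. 0) a" using i unfolding Seg_def by (intro CollectI exI[of _ i]) auto
    then show False using assms(3) by simp
  qed
  then have "m = cum e i" using i by simp
  then show ?thesis using cum_in_Ps[of e i] assms(2) by simp
qed

lemma seg_compl:
  assumes ae: "\<forall>j. a j \<le> e j" and z: "\<forall>i\<ge>N. e i = 0"
  shows "{1..cum e N} - Seg e (\<lambda>_. 0) a = Seg e a e"
proof (intro set_eqI iffI)
  fix m assume m: "m \<in> {1..cum e N} - Seg e (\<lambda>_. 0) a"
  then have "1 \<le> m" "m \<le> cum e N" by auto
  then obtain i where i: "cum e i < m" "m \<le> cum e (Suc i)" using block_exists[of m e N] by blast
  have ee: "\<forall>j. e j \<le> e j" by simp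
  have "\<not> (cum e i + 0 < m \<and> m \<le> cum e i + a i)" using m seg_mem[OF ae i, of "\<lambda>_. 0"] by simp
  then have "cum e i + a i < m \<and> m \<le> cum e i + e i" using i by auto
  then show "m \<in> Seg e a e" using seg_mem[OF ee i, of a] by simp
next
  fix m assume m: "m \<in> Seg e a e"
  have ee: "\<forall>j. e j \<le> e j" by simp
  have m1: "m \<in> {1..cum e N}" using seg_sub[OF ee z, of a] m by blast
  then have "1 \<le> m" "m \<le> cum e N" by auto
  then obtain i where i: "cum e i < m" "m \<le> cum e (Suc i)" using block_exists[of m e N] by blast
  have "cum e i + a i < m" using m seg_mem[OF ee i, of a] by simp
  then have "m \<notin> Seg e (\<lambda>_. 0) a" using seg_mem[OF ae i, of "\<lambda>_. 0"] by simp
  then show "m \<in> {1..cum e N} - Seg e (\<lambda>_. 0) a" using m1 by blast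
qed

lemma seg_inj:
  assumes "\<forall>j. a j \<le> e j" "\<forall>j. b j \<le> e j" "Seg e (\<lambda>_. 0) a = Seg e (\<lambda>_. 0) b"
  shows "a = b"
proof
  fix i
  have z: "\<forall>j. (0::nat) \<le> f j" for f :: "nat \<Rightarrow> nat" by simp
  have ca: "cum a k = card (Seg e (\<lambda>_. 0) a \<inter> {1..cum e k})" for k
    using seg_card_cum[OF assms(1) z, of k] by simp
  have cb: "cum b k = card (Seg e (\<lambda>_. 0) b \<inter> {1..cum e k})" for k
    using seg_card_cum[OF assms(2) z, of k] by simp
  have "cum a k = cum b k" for k unfolding ca cb assms(3) ..
  from this[of "Suc i"] this[of i] show "a i = b i" by simp
qed

lemma interval_lemma:
  assumes "X \<subseteq> {l<..h}" "\<And>x y. x \<in> X \<Longrightarrow> l < y \<Longrightarrow> y \<le> x \<Longrightarrow> y \<in> X"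
  shows "X = {l<..l + card X}"
proof (cases "X = {}")
  case True then show ?thesis by simp
next
  case False
  have fin: "finite X" using assms(1) finite_subset by blast
  define t where "t = Max X"
  have t: "t \<in> X" "\<And>x. x \<in> X \<Longrightarrow> x \<le> t" using fin False unfolding t_def by auto
  have "X = {l<..t}"
  proof (intro set_eqI iffI)
    fix x assume x: "x \<in> X" 
    then have "l < x" using assms(1) by auto
    then show "x \<in> {l<..t}" using t(2)[OF x] by simp
  next
    fix x assume "x \<in> {l<..t}" then show "x \<in> X" using assms(2)[OF t(1)] by simp
  qed
  moreover have "l < t" using t(1) assms(1) by auto
  ultimately show ?thesis by simp
qed

lemma seg_surj:
  assumes z: "\<forall>i\<ge>N. e i = 0" and S: "S \<subseteq> {1..cum e N}"
    and cond: "\<forall>m. 1 \<le> m \<longrightarrow> m < cum e N \<longrightarrow> m \<notin> S \<longrightarrow> Suc m \<in> S \<longrightarrow> m \<in> Ps e"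
  defines "a \<equiv> (\<lambda>i. card (S \<inter> {cum e i<..cum e (Suc i)}))"
  shows "(\<forall>j. a j \<le> e j) \<and> Seg e (\<lambda>_. 0) a = S"
proof -
  have ale: "\<forall>j. a j \<le> e j"
  proof
    fix j
    have "a j \<le> card {cum e j<..cum e (Suc j)}" unfolding a_def by (intro card_mono) auto
    then show "a j \<le> e j" by simp
  qed
  have down: "m' \<in> S" if "cum e i < m'" "m' + d \<in> S" "m' + d \<le> cum e (Suc i)" for i m' d
    using that
  proof (induction d)
    case 0 then show ?case by simp
  next
    case (Suc d)
    have "m' + d \<in> S"
    proof (rule ccontr)
      assume nS: "m' + d \<notin> S"
      have "m' + Suc d \<in> {1..cum e N}" using Suc.prems(2) S by blast
      then have "m' + d < cum e N" by simp
      moreover have "1 \<le> m' + d" using Suc.prems(1) by simp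
      moreover have "Suc (m' + d) \<in> S" using Suc.prems(2) by simp
      ultimately have "m' + d \<in> Ps e" using cond nS by blast
      then obtain j where j: "m' + d = cum e (Suc j)" "e j \<noteq> 0" unfolding Ps_def by auto
      have "j = i" using j Suc.prems
        by (intro block_unique[of e j "m' + d" i]) auto
      then show False using j Suc.prems by simp
    qed
    then show ?case using Suc by simp
  qed
  have blk: "S \<inter> {cum e i<..cum e (Suc i)} = {cum e i<..cum e i + a i}" for i
  proof -
    have "S \<inter> {cum e i<..cum e (Suc i)} = {cum e i<..cum e i + card (S \<inter> {cum e i<..cum e (Suc i)})}"
    proof (rule interval_lemma)
      fix x y assume "x \<in> S \<inter> {cum e i<..cum e (Suc i)}" "cum e i < y" "y \<le> x"
      then have "y + (x - y) \<in> S" "y + (x - y) \<le> cum e (Suc i)" by auto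
      then have "y \<in> S" using down[of i y "x - y"] \<open>cum e i < y\<close> by blast
      then show "y \<in> S \<inter> {cum e i<..cum e (Suc i)}"
        using \<open>y \<le> x\<close> \<open>cum e i < y\<close> \<open>x \<in> S \<inter> {cum e i<..cum e (Suc i)}\<close> by auto
    qed auto
    then show ?thesis unfolding a_def by simp
  qed
  have "Seg e (\<lambda>_. 0) a = S"
  proof (intro set_eqI iffI)
    fix m assume "m \<in> Seg e (\<lambda>_. 0) a"
    then obtain i where i: "cum e i < m" "m \<le> cum e i + a i" unfolding Seg_def by auto
    then show "m \<in> S" using blk[of i] by auto
  next
    fix m assume m: "m \<in> S"
    have "1 \<le> m" "m \<le> cum e N" using S m by auto
    then obtain i where i: "cum e i < m" "m \<le> cum e (Suc i)" using block_exists[of m e N] by blast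
    then have "m \<le> cum e i + a i" using blk[of i] m by auto
    then show "m \<in> Seg e (\<lambda>_. 0) a" using i unfolding Seg_def by (intro CollectI exI[of _ i]) auto
  qed
  then show ?thesis using ale by simp
qed



lemma zetaJ_val:
  assumes "J \<subseteq> {1..<p}" "1 \<le> i" "i \<le> p"
  shows "zetaJ p J i = p - Min (insert p {j \<in> J. i \<le> j}) + (i - Max (insert 0 {j \<in> J. j < i}))"
  using assms unfolding zetaJ_def by (simp add: Let_def)

lemma Max_lt:
  fixes J :: "nat set" and p i :: nat
  assumes "J \<subseteq> {1..<p}" "1 \<le> i"
  shows "Max (insert 0 {j \<in> J. j < i}) < i"
proof -
  have fin: "finite {j \<in> J. j < i}" by (simp add: finite_Collect_conjI)
  show ?thesis using assms by (subst Max_less_iff) (use fin in auto)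
qed

lemma Min_ge:
  fixes J :: "nat set" and p i :: nat
  assumes "J \<subseteq> {1..<p}" "i \<le> p"
  shows "i \<le> Min (insert p {j \<in> J. i \<le> j}) \<and> Min (insert p {j \<in> J. i \<le> j}) \<le> p"
proof -
  have fJ: "finite J" by (rule finite_subset[OF assms(1)]) simp
  have fin: "finite {j \<in> J. i \<le> j}" by (rule finite_subset[of _ J]) (auto simp: fJ)
  show ?thesis using assms fin by (auto simp: Min_ge_iff)
qed

lemma zetaJ_range:
  assumes "J \<subseteq> {1..<p}" "1 \<le> i" "i \<le> p"
  shows "1 \<le> zetaJ p J i \<and> zetaJ p J i \<le> p"
proof -
  define a where "a = Max (insert 0 {j \<in> J. j < i})"
  define b where "b = Min (insert p {j \<in> J. i \<le> j})"
  have "zetaJ p J i = p - b + (i - a)" using zetaJ_val[OF assms] unfolding a_def b_def .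
  moreover have "a < i" using Max_lt[OF assms(1,2)] unfolding a_def .
  moreover have "i \<le> b" "b \<le> p" using Min_ge[OF assms(1,3)] unfolding b_def by auto
  ultimately show ?thesis by linarith
qed

lemma zetaJ_des:
  assumes J: "J \<subseteq> {1..<p}" and i: "1 \<le> i" "i < p"
  shows "zetaJ p J (Suc i) < zetaJ p J i \<longleftrightarrow> i \<in> J"
proof -
  have finJ: "finite J" using J finite_subset by blast
  define a where "a = Max (insert 0 {j \<in> J. j < i})"
  define b where "b = Min (insert p {j \<in> J. i \<le> j})"
  define a' where "a' = Max (insert 0 {j \<in> J. j < Suc i})"
  define b' where "b' = Min (insert p {j \<in> J. Suc i \<le> j})"
  have z1: "zetaJ p J i = p - b + (i - a)" using zetaJ_val[OF J, of i] i unfolding a_def b_def by simp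
  have z2: "zetaJ p J (Suc i) = p - b' + (Suc i - a')" using zetaJ_val[OF J, of "Suc i"] i unfolding a'_def b'_def by simp
  have ha: "a < i" using Max_lt[OF J i(1)] unfolding a_def .
  have hb: "i \<le> b" "b \<le> p" using Min_ge[OF J, of i] i unfolding b_def by auto
  have ha': "a' < Suc i" using Max_lt[OF J, of "Suc i"] unfolding a'_def by simp
  have hb': "Suc i \<le> b'" "b' \<le> p" using Min_ge[OF J, of "Suc i"] i unfolding b'_def by auto
  show ?thesis
  proof (cases "i \<in> J")
    case True
    have "a' = i" unfolding a'_def using True finJ
      by (intro Max_eqI) auto
    moreover have "b = i" unfolding b_def using True finJ J
      by (intro Min_eqI) (auto simp: finite_Collect_conjI)
    ultimately show ?thesis using True z1 z2 ha hb hb' by auto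
  next
    case False
    have "{j \<in> J. j < Suc i} = {j \<in> J. j < i}" using False by (auto simp: less_Suc_eq)
    then have "a' = a" unfolding a'_def a_def by simp
    moreover have "{j \<in> J. Suc i \<le> j} = {j \<in> J. i \<le> j}" using False by (auto simp: Suc_le_eq order.order_iff_strict)
    then have "b' = b" unfolding b'_def b_def by simp
    ultimately show ?thesis using False z1 z2 ha hb by auto
  qed
qed



section \<open>Generic facts on strictly increasing runs\<close>

definition incr_on :: "nat \<Rightarrow> nat \<Rightarrow> (nat \<Rightarrow> nat) \<Rightarrow> bool" where
  "incr_on a c f = (\<forall>i j. a < i \<longrightarrow> i < j \<longrightarrow> j \<le> a + c \<longrightarrow> f i < f j)"

lemma incr_le:
  assumes "incr_on a c f" "a < i" "i \<le> j" "j \<le> a + c"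
  shows "f i \<le> f j"
  using assms unfolding incr_on_def by (cases "i = j") (auto simp: order.order_iff_strict)

lemma incr_inj: "incr_on a c f \<Longrightarrow> inj_on f {a<..a+c}"
  unfolding inj_on_def incr_on_def by (metis greaterThanAtMost_iff linorder_neqE_nat less_not_refl)

lemma incr_less_iff:
  assumes "incr_on a c f" "i \<in> {a<..a+c}" "j \<in> {a<..a+c}"
  shows "f i < f j \<longleftrightarrow> i < j"
  using assms unfolding incr_on_def by (metis greaterThanAtMost_iff linorder_neqE_nat less_asym less_not_refl)

lemma gen_card:
  assumes inc: "incr_on a c f" and j: "j \<in> {a<..a+c}" and pos: "\<forall>i\<in>{a<..a+c}. 1 \<le> f i"
  shows "card (f ` {a<..a+c} \<inter> {1..f j}) = j - a"
proof -
  have eq: "f ` {a<..a+c} \<inter> {1..f j} = f ` {a<..j}"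
  proof (intro set_eqI iffI)
    fix x assume "x \<in> f ` {a<..a+c} \<inter> {1..f j}"
    then obtain i where i: "i \<in> {a<..a+c}" "x = f i" "f i \<le> f j" by auto
    then have "i \<le> j" using incr_less_iff[OF inc j i(1)] by (meson leD leI)
    then show "x \<in> f ` {a<..j}" using i by auto
  next
    fix x assume "x \<in> f ` {a<..j}"
    then obtain i where i: "a < i" "i \<le> j" "x = f i" by auto
    then have "i \<in> {a<..a+c}" using j by auto
    then show "x \<in> f ` {a<..a+c} \<inter> {1..f j}" using i pos incr_le[OF inc i(1) i(2)] j by auto
  qed
  have "inj_on f {a<..j}" by (rule inj_on_subset[OF incr_inj[OF inc]]) (use j in auto)
  then show ?thesis unfolding eq by (simp add: card_image)
qed

lemma gen_next:
  assumes inc: "incr_on a c f" and j: "a < j" "j < a + c"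
  shows "Suc (f j) \<in> f ` {a<..a+c} \<longleftrightarrow> f (Suc j) = Suc (f j)"
proof
  assume "Suc (f j) \<in> f ` {a<..a+c}"
  then obtain i where i: "i \<in> {a<..a+c}" "f i = Suc (f j)" by auto
  have jj: "j \<in> {a<..a+c}" "Suc j \<in> {a<..a+c}" using j by auto
  have "j < i" using incr_less_iff[OF inc jj(1) i(1)] i by simp
  show "f (Suc j) = Suc (f j)"
  proof (cases "i = Suc j")
    case True then show ?thesis using i by simp
  next
    case False
    then have "Suc j < i" using \<open>j < i\<close> by simp
    then have "f (Suc j) < f i" using incr_less_iff[OF inc jj(2) i(1)] by simp
    moreover have "f j < f (Suc j)" using incr_less_iff[OF inc jj(1) jj(2)] by simp
    ultimately show ?thesis using i by simp
  qed
next
  assume "f (Suc j) = Suc (f j)"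
  then show "Suc (f j) \<in> f ` {a<..a+c}" using j by (metis greaterThanAtMost_iff image_eqI less_Suc_eq Suc_leI less_trans_Suc)
qed

lemma gen_last:
  assumes inc: "incr_on a c f" and c: "1 \<le> c"
  shows "Suc (f (a + c)) \<notin> f ` {a<..a+c}"
proof
  assume "Suc (f (a + c)) \<in> f ` {a<..a+c}"
  then obtain i where i: "i \<in> {a<..a+c}" "f i = Suc (f (a + c))" by auto
  have "a + c \<in> {a<..a+c}" using c by auto
  then have "f i \<le> f (a + c)" using incr_le[OF inc, of i "a + c"] i by auto
  then show False using i by simp
qed

lemma gen_Qs:
  assumes inc: "incr_on a c f" and c: "1 \<le> c" and pos: "\<forall>i\<in>{a<..a+c}. 1 \<le> f i"
  shows "Qs R (f ` {a<..a+c}) = insert c {k \<in> {1..<c}. f (a + k) \<in> R \<or> f (Suc (a + k)) \<noteq> Suc (f (a + k))}"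
proof (intro set_eqI iffI)
  fix x assume "x \<in> Qs R (f ` {a<..a+c})"
  then obtain m where x: "x = card (f ` {a<..a+c} \<inter> {1..m})" and m: "m \<in> f ` {a<..a+c}"
    and cond: "m \<in> R \<or> Suc m \<notin> f ` {a<..a+c}" unfolding Qs_def by blast
  from m obtain j where j: "j \<in> {a<..a+c}" "m = f j" by auto
  have xj: "x = j - a" using gen_card[OF inc j(1) pos] x j by simp
  show "x \<in> insert c {k \<in> {1..<c}. f (a + k) \<in> R \<or> f (Suc (a + k)) \<noteq> Suc (f (a + k))}"
  proof (cases "j = a + c")
    case True then show ?thesis using xj by simp
  next
    case False
    then have jl: "a < j" "j < a + c" using j by auto
    have "a + (j - a) = j" using jl by simp
    then show ?thesis using xj cond gen_next[OF inc jl] jl j by auto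
  qed
next
  fix x assume x: "x \<in> insert c {k \<in> {1..<c}. f (a + k) \<in> R \<or> f (Suc (a + k)) \<noteq> Suc (f (a + k))}"
  show "x \<in> Qs R (f ` {a<..a+c})"
  proof (cases "x = c")
    case True
    have j: "a + c \<in> {a<..a+c}" using c by auto
    have "card (f ` {a<..a+c} \<inter> {1..f (a + c)}) = x" using gen_card[OF inc j pos] True by simp
    moreover have "Suc (f (a + c)) \<notin> f ` {a<..a+c}" by (rule gen_last[OF inc c])
    ultimately show ?thesis unfolding Qs_def using j by blast
  next
    case False
    then have k: "x \<in> {1..<c}" "f (a + x) \<in> R \<or> f (Suc (a + x)) \<noteq> Suc (f (a + x))" using x by auto
    have j: "a + x \<in> {a<..a+c}" using k by auto
    have "card (f ` {a<..a+c} \<inter> {1..f (a + x)}) = x" using gen_card[OF inc j pos] by simp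
    moreover have "f (a + x) \<in> R \<or> Suc (f (a + x)) \<notin> f ` {a<..a+c}"
      using k gen_next[OF inc, of "a + x"] by auto
    moreover have "f (a + x) \<in> f ` {a<..a+c}" using j by (rule imageI)
    ultimately show ?thesis unfolding Qs_def
      by (intro CollectI exI[of _ "f (a + x)"]) simp
  qed
qed



definition SS :: "nat \<Rightarrow> nat \<Rightarrow> nat set \<Rightarrow> nat set \<Rightarrow> nat set \<Rightarrow> nat set set" where
  "SS p q R J K = {S. S \<subseteq> {1..p+q} \<and> (\<forall>m. 1 \<le> m \<longrightarrow> m < p+q \<longrightarrow> m \<notin> S \<longrightarrow> Suc m \<in> S \<longrightarrow> m \<in> R)
      \<and> Qs (insert (p+q) R) S = insert p J \<and> Qs (insert (p+q) R) ({1..p+q} - S) = insert q K}"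

locale shuf =
  fixes p q :: nat and z :: "nat \<Rightarrow> nat"
  assumes zs: "z \<in> shuffles p q" and p1: "1 \<le> p" and q1: "1 \<le> q"
begin

lemma perm: "z permutes {1..p+q}" using zs unfolding shuffles_def by auto

lemma inc1: "incr_on 0 p z" using zs unfolding shuffles_def incr_on_def by auto
lemma inc2: "incr_on p q z" using zs unfolding shuffles_def incr_on_def by auto

lemma zin: "i \<in> {1..p+q} \<Longrightarrow> z i \<in> {1..p+q}" using permutes_in_image[OF perm] by simp

lemma zinj_iff: "z i = z j \<longleftrightarrow> i = j" using permutes_inj[OF perm] by (simp add: inj_eq)
lemma zinj: "z i = z j \<Longrightarrow> i = j" using zinj_iff by simp

lemma pos1: "\<forall>i\<in>{0<..0+p}. 1 \<le> z i" using zin by auto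
lemma pos2: "\<forall>i\<in>{p<..p+q}. 1 \<le> z i" using zin by auto

definition "S = z ` {0<..0+p}"
definition "T = z ` {p<..p+q}"

lemma mem_S: "i \<in> {1..p+q} \<Longrightarrow> z i \<in> S \<longleftrightarrow> i \<le> p"
  unfolding S_def using zinj_iff by auto

lemma ST: "{1..p+q} - S = T"
proof -
  have "z ` {1..p+q} = {1..p+q}" using permutes_image[OF perm] .
  moreover have "{1..p+q} = {0<..0+p} \<union> {p<..p+q}" by auto
  ultimately have "{1..p+q} = S \<union> T" unfolding S_def T_def by (metis image_Un)
  moreover have "S \<inter> T = {}" unfolding S_def T_def using zinj_iff by auto
  ultimately show ?thesis by blast
qed

lemma S_sub: "S \<subseteq> {1..p+q}" unfolding S_def using zin by auto

lemma adj1: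
  assumes "i \<in> {0<..0+p}" "i' \<in> {0<..0+p}" "z i' = Suc (z i)"
  shows "i' = Suc i"
proof -
  have "i < i'" using incr_less_iff[OF inc1 assms(1,2)] assms(3) by simp
  show ?thesis
  proof (rule ccontr)
    assume "i' \<noteq> Suc i"
    then have "Suc i < i'" using \<open>i < i'\<close> by simp
    have si: "Suc i \<in> {0<..0+p}" using assms \<open>Suc i < i'\<close> by auto
    have "z (Suc i) < z i'" using incr_less_iff[OF inc1 si assms(2)] \<open>Suc i < i'\<close> by simp
    moreover have "z i < z (Suc i)" using incr_less_iff[OF inc1 assms(1) si] by simp
    ultimately show False using assms(3) by simp
  qed
qed

lemma adj2:
  assumes "i \<in> {p<..p+q}" "i' \<in> {p<..p+q}" "z i' = Suc (z i)"
  shows "i' = Suc i"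
proof -
  have "i < i'" using incr_less_iff[OF inc2 assms(1,2)] assms(3) by simp
  show ?thesis
  proof (rule ccontr)
    assume "i' \<noteq> Suc i"
    then have "Suc i < i'" using \<open>i < i'\<close> by simp
    have si: "Suc i \<in> {p<..p+q}" using assms \<open>Suc i < i'\<close> by auto
    have "z (Suc i) < z i'" using incr_less_iff[OF inc2 si assms(2)] \<open>Suc i < i'\<close> by simp
    moreover have "z i < z (Suc i)" using incr_less_iff[OF inc2 assms(1) si] by simp
    ultimately show False using assms(3) by simp
  qed
qed

lemma rmap_mem:
  assumes J': "J' \<subseteq> {1..<p}" and K': "K' \<subseteq> {1..<q}"
  shows "m \<in> r_map p q z J' K' \<longleftrightarrow>
    (m \<in> {1..<p+q} \<and> m \<notin> S \<and> Suc m \<in> S) \<or> (\<exists>j\<in>J'. m = z j \<and> z (Suc j) = Suc m)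
      \<or> (\<exists>k\<in>K'. m = z (p + k) \<and> z (Suc (p + k)) = Suc m)"
proof (cases "m \<in> {1..<p+q}")
  case False
  have "\<not> (\<exists>j\<in>J'. m = z j \<and> z (Suc j) = Suc m)"
  proof
    assume "\<exists>j\<in>J'. m = z j \<and> z (Suc j) = Suc m"
    then obtain j where j: "j \<in> J'" "m = z j" "z (Suc j) = Suc m" by blast
    have "j \<in> {1..p+q}" "Suc j \<in> {1..p+q}" using j J' by auto
    then show False using zin[of j] zin[of "Suc j"] j False by auto
  qed
  moreover have "\<not> (\<exists>k\<in>K'. m = z (p + k) \<and> z (Suc (p + k)) = Suc m)"
  proof
    assume "\<exists>k\<in>K'. m = z (p + k) \<and> z (Suc (p + k)) = Suc m"
    then obtain k where k: "k \<in> K'" "m = z (p + k)" "z (Suc (p + k)) = Suc m" by blast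
    have "p + k \<in> {1..p+q}" "Suc (p + k) \<in> {1..p+q}" using k K' by auto
    then show False using zin[of "p + k"] zin[of "Suc (p + k)"] k False by auto
  qed
  moreover have "m \<notin> r_map p q z J' K'" using False unfolding r_map_def Des_def by auto
  ultimately show ?thesis using False by blast
next
  case True
  define W where "W = cross p (zetaJ p J') (zetaJ q K')"
  define i where "i = inv z m"
  define i' where "i' = inv z (Suc m)"
  have ii: "i \<in> {1..p+q}" "i' \<in> {1..p+q}" unfolding i_def i'_def
    using permutes_in_image[OF permutes_inv[OF perm]] True by auto
  have zi: "z i = m" "z i' = Suc m" unfolding i_def i'_def using permutes_inverses(1)[OF perm] by auto
  have rm: "m \<in> r_map p q z J' K' \<longleftrightarrow> W i' < W i"
    using True unfolding r_map_def Des_def W_def i_def i'_def by auto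
  have Wi: "W x = (if x \<le> p then zetaJ p J' x else p + zetaJ q K' (x - p))" for x
    unfolding W_def cross_def by simp
  have eqj: "m = z j \<longleftrightarrow> j = i" for j using zi zinj by auto
  have mS: "m \<in> S \<longleftrightarrow> i \<le> p" using mem_S[OF ii(1)] zi by simp
  have mS': "Suc m \<in> S \<longleftrightarrow> i' \<le> p" using mem_S[OF ii(2)] zi by simp
  consider "i \<le> p" "i' \<le> p" | "i \<le> p" "p < i'" | "p < i" "i' \<le> p" | "p < i" "p < i'" by linarith
  then show ?thesis
  proof cases
    case 1
    have a: "i' = Suc i" using adj1[of i i'] ii 1 zi by auto
    then have ip: "1 \<le> i" "i < p" using ii 1 by auto
    have "W i' < W i \<longleftrightarrow> i \<in> J'" using zetaJ_des[OF J' ip] a 1 Wi by simp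
    moreover have "\<not> (\<exists>k\<in>K'. m = z (p + k) \<and> z (Suc (p + k)) = Suc m)" using eqj 1 K' by auto
    ultimately show ?thesis using rm mS mS' 1 eqj a zi by auto
  next
    case 2
    have "zetaJ p J' i \<le> p" using zetaJ_range[OF J', of i] ii 2 by auto
    then have "\<not> W i' < W i" using Wi 2 by simp
    moreover have "\<not> (\<exists>j\<in>J'. m = z j \<and> z (Suc j) = Suc m)"
    proof
      assume "\<exists>j\<in>J'. m = z j \<and> z (Suc j) = Suc m"
      then obtain j where j: "j \<in> J'" "j = i" "z (Suc j) = Suc m" using eqj by blast
      then have "Suc j = i'" using zi zinj by auto
      then show False using j J' 2 by auto
    qed
    moreover have "\<not> (\<exists>k\<in>K'. m = z (p + k) \<and> z (Suc (p + k)) = Suc m)" using eqj 2 K' by auto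
    ultimately show ?thesis using rm mS 2 by auto
  next
    case 3
    have "zetaJ p J' i' \<le> p" using zetaJ_range[OF J', of i'] ii 3 by auto
    moreover have "1 \<le> zetaJ q K' (i - p)" using zetaJ_range[OF K', of "i - p"] ii 3 by auto
    ultimately have "W i' < W i" using Wi 3 by simp
    then show ?thesis using rm mS mS' 3 True by auto
  next
    case 4
    have a: "i' = Suc i" using adj2[of i i'] ii 4 zi by auto
    then have ip: "1 \<le> i - p" "i - p < q" using ii 4 by auto
    have sp: "Suc i - p = Suc (i - p)" using 4 by simp
    have "W i' < W i \<longleftrightarrow> i - p \<in> K'" using zetaJ_des[OF K' ip] a 4 Wi sp by simp
    moreover have "\<not> (\<exists>j\<in>J'. m = z j \<and> z (Suc j) = Suc m)" using eqj 4 J' by auto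
    moreover have "(\<exists>k\<in>K'. m = z (p + k) \<and> z (Suc (p + k)) = Suc m) \<longleftrightarrow> i - p \<in> K'"
    proof
      assume "\<exists>k\<in>K'. m = z (p + k) \<and> z (Suc (p + k)) = Suc m"
      then obtain k where "k \<in> K'" "p + k = i" using eqj by blast
      then show "i - p \<in> K'" by auto
    next
      assume "i - p \<in> K'"
      moreover have "m = z (p + (i - p))" "z (Suc (p + (i - p))) = Suc m" using 4 zi a by auto
      ultimately show "\<exists>k\<in>K'. m = z (p + k) \<and> z (Suc (p + k)) = Suc m" by blast
    qed
    ultimately show ?thesis using rm mS' 4 by auto
  qed
qed

end


lemma insert_eq_iff': "a \<notin> A \<Longrightarrow> a \<notin> B \<Longrightarrow> insert a A = insert a B \<longleftrightarrow> A = B"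
  by (rule insert_ident)

context shuf begin

definition "Dc R = (\<forall>m\<in>{1..<p+q}. m \<notin> S \<and> Suc m \<in> S \<longrightarrow> m \<in> R)"
definition "Jmax R = {j\<in>{1..<p}. z (Suc j) = Suc (z j) \<longrightarrow> z j \<in> R}"
definition "Kmax R = {k\<in>{1..<q}. z (Suc (p + k)) = Suc (z (p + k)) \<longrightarrow> z (p + k) \<in> R}"

lemma sub_iff:
  assumes J': "J' \<subseteq> {1..<p}" and K': "K' \<subseteq> {1..<q}"
  shows "r_map p q z J' K' \<subseteq> R \<longleftrightarrow> Dc R \<and> (\<forall>j\<in>J'. z (Suc j) = Suc (z j) \<longrightarrow> z j \<in> R)
     \<and> (\<forall>k\<in>K'. z (Suc (p + k)) = Suc (z (p + k)) \<longrightarrow> z (p + k) \<in> R)"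
  unfolding Dc_def subset_iff rmap_mem[OF J' K'] by blast

lemma greatest_char:
  assumes J: "J \<subseteq> {1..<p}" and K: "K \<subseteq> {1..<q}"
  shows "greatest_is p q z R J K \<longleftrightarrow> Dc R \<and> J = Jmax R \<and> K = Kmax R"
proof
  assume g: "greatest_is p q z R J K"
  have in1: "r_map p q z J K \<subseteq> R" using g unfolding greatest_is_def Let_def by blast
  then have d: "Dc R" and j1: "J \<subseteq> Jmax R" and k1: "K \<subseteq> Kmax R"
    using sub_iff[OF J K] J K unfolding Jmax_def Kmax_def by auto
  have JM: "Jmax R \<subseteq> {1..<p}" "Kmax R \<subseteq> {1..<q}" unfolding Jmax_def Kmax_def by auto
  have "r_map p q z (Jmax R) (Kmax R) \<subseteq> R" using sub_iff[OF JM] d unfolding Jmax_def Kmax_def by auto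
  then have "Jmax R \<subseteq> J \<and> Kmax R \<subseteq> K" using g JM unfolding greatest_is_def Let_def by blast
  then show "Dc R \<and> J = Jmax R \<and> K = Kmax R" using d j1 k1 by blast
next
  assume a: "Dc R \<and> J = Jmax R \<and> K = Kmax R"
  have in1: "r_map p q z J K \<subseteq> R" using sub_iff[OF J K] a unfolding Jmax_def Kmax_def by auto
  have "J' \<subseteq> J \<and> K' \<subseteq> K" if "J' \<subseteq> {1..<p}" "K' \<subseteq> {1..<q}" "r_map p q z J' K' \<subseteq> R" for J' K'
    using sub_iff[OF that(1,2)] that a unfolding Jmax_def Kmax_def by auto
  then show "greatest_is p q z R J K" using in1 J K unfolding greatest_is_def Let_def by blast
qed

lemma SS_char:
  assumes J: "J \<subseteq> {1..<p}" and K: "K \<subseteq> {1..<q}" and R: "R \<subseteq> {1..<p+q}"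
  shows "greatest_is p q z R J K \<longleftrightarrow> S \<in> SS p q R J K"
proof -
  have zp: "z (0 + p) \<le> p + q" using zin[of p] p1 by auto
  have zq: "z (p + q) \<le> p + q" using zin[of "p + q"] p1 by auto
  have Q1: "Qs (insert (p+q) R) S = insert p (Jmax R)"
  proof -
    have "Qs (insert (p+q) R) S = insert p {k \<in> {1..<p}. z (0 + k) \<in> insert (p+q) R \<or> z (Suc (0 + k)) \<noteq> Suc (z (0 + k))}"
      unfolding S_def by (rule gen_Qs[OF inc1 p1 pos1])
    also have "{k \<in> {1..<p}. z (0 + k) \<in> insert (p+q) R \<or> z (Suc (0 + k)) \<noteq> Suc (z (0 + k))} = Jmax R"
    proof -
      have "z k < z (0 + p)" if "k \<in> {1..<p}" for k
        using incr_less_iff[OF inc1, of k p] that p1 by auto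
      then show ?thesis unfolding Jmax_def using zp by fastforce
    qed
    finally show ?thesis .
  qed
  have Q2: "Qs (insert (p+q) R) ({1..p+q} - S) = insert q (Kmax R)"
  proof -
    have "Qs (insert (p+q) R) ({1..p+q} - S) = insert q {k \<in> {1..<q}. z (p + k) \<in> insert (p+q) R \<or> z (Suc (p + k)) \<noteq> Suc (z (p + k))}"
      unfolding ST T_def by (rule gen_Qs[OF inc2 q1 pos2])
    also have "{k \<in> {1..<q}. z (p + k) \<in> insert (p+q) R \<or> z (Suc (p + k)) \<noteq> Suc (z (p + k))} = Kmax R"
    proof -
      have "z (p + k) < z (p + q)" if "k \<in> {1..<q}" for k
        using incr_less_iff[OF inc2, of "p + k" "p + q"] that q1 by auto
      then show ?thesis unfolding Kmax_def using zq by fastforce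
    qed
    finally show ?thesis .
  qed
  have pJ: "p \<notin> J" "p \<notin> Jmax R" using J unfolding Jmax_def by auto
  have qK: "q \<notin> K" "q \<notin> Kmax R" using K unfolding Kmax_def by auto
  have c: "(\<forall>m. 1 \<le> m \<longrightarrow> m < p+q \<longrightarrow> m \<notin> S \<longrightarrow> Suc m \<in> S \<longrightarrow> m \<in> R) \<longleftrightarrow> Dc R"
    unfolding Dc_def by auto
  show ?thesis unfolding greatest_char[OF J K] SS_def mem_Collect_eq Q1 Q2 c
    insert_eq_iff'[OF pJ(2) pJ(1)] insert_eq_iff'[OF qK(2) qK(1)] using S_sub by auto
qed

end


lemma card_prefix_inj:
  fixes X :: "nat set"
  assumes fin: "finite X" and x: "x \<in> X" and y: "y \<in> X" and x1: "1 \<le> x" and y1: "1 \<le> y"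
    and c: "card (X \<inter> {1..x}) = card (X \<inter> {1..y})"
  shows "x = y"
proof (rule ccontr)
  assume "x \<noteq> y"
  then consider "x < y" | "y < x" by linarith
  then show False
  proof cases
    case 1
    have "X \<inter> {1..x} \<subseteq> X \<inter> {1..y}" using 1 by auto
    moreover have "y \<in> X \<inter> {1..y}" "y \<notin> X \<inter> {1..x}" using 1 y y1 by auto
    ultimately have ps: "X \<inter> {1..x} \<subset> X \<inter> {1..y}" by blast
    have "card (X \<inter> {1..x}) < card (X \<inter> {1..y})" using psubset_card_mono[OF _ ps] by simp
    then show False using c by simp
  next
    case 2
    have "X \<inter> {1..y} \<subseteq> X \<inter> {1..x}" using 2 by auto
    moreover have "x \<in> X \<inter> {1..x}" "x \<notin> X \<inter> {1..y}" using 2 x x1 by auto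
    ultimately have ps: "X \<inter> {1..y} \<subset> X \<inter> {1..x}" by blast
    have "card (X \<inter> {1..y}) < card (X \<inter> {1..x})" using psubset_card_mono[OF _ ps] by simp
    then show False using c by simp
  qed
qed

lemma shuf_inj:
  assumes z: "z \<in> shuffles p q" and z': "z' \<in> shuffles p q" and p1: "1 \<le> p" and q1: "1 \<le> q"
    and eq: "z ` {0<..0+p} = z' ` {0<..0+p}"
  shows "z = z'"
proof
  interpret A: shuf p q z using z p1 q1 by unfold_locales
  interpret B: shuf p q z' using z' p1 q1 by unfold_locales
  have SS: "A.S = B.S" unfolding A.S_def B.S_def using eq .
  have TT: "A.T = B.T" using A.ST B.ST SS by simp
  fix j
  show "z j = z' j"
  proof (cases "j \<in> {1..p+q}")
    case False then show ?thesis
      using permutes_not_in[OF A.perm] permutes_not_in[OF B.perm] by simp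
  next
    case True
    show ?thesis
    proof (cases "j \<le> p")
      case True
      then have j: "j \<in> {0<..0+p}" using \<open>j \<in> {1..p+q}\<close> by auto
      have c1: "card (A.S \<inter> {1..z j}) = j - 0" unfolding A.S_def by (rule gen_card[OF A.inc1 j A.pos1])
      have c2: "card (B.S \<inter> {1..z' j}) = j - 0" unfolding B.S_def by (rule gen_card[OF B.inc1 j B.pos1])
      show ?thesis
        using card_prefix_inj[of A.S "z j" "z' j"] c1 c2 SS j A.pos1 B.pos1 unfolding A.S_def B.S_def
        by (metis finite_imageI finite_greaterThanAtMost imageI)
    next
      case False
      then have j: "j \<in> {p<..p+q}" using \<open>j \<in> {1..p+q}\<close> by auto
      have c1: "card (A.T \<inter> {1..z j}) = j - p" unfolding A.T_def by (rule gen_card[OF A.inc2 j A.pos2])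
      have c2: "card (B.T \<inter> {1..z' j}) = j - p" unfolding B.T_def by (rule gen_card[OF B.inc2 j B.pos2])
      show ?thesis
        using card_prefix_inj[of A.T "z j" "z' j"] c1 c2 TT j A.pos2 B.pos2 unfolding A.T_def B.T_def
        by (metis finite_imageI finite_greaterThanAtMost imageI)
    qed
  qed
qed

lemma shuf_exists:
  assumes S: "S \<subseteq> {1..p+q}" and c: "card S = p"
  shows "\<exists>z\<in>shuffles p q. z ` {0<..0+p} = S"
proof -
  define xs where "xs = sorted_list_of_set S"
  define ys where "ys = sorted_list_of_set ({1..p+q} - S)"
  define L where "L = xs @ ys"
  have finS: "finite S" using S finite_subset by blast
  have lx: "length xs = p" unfolding xs_def using c by simp
  have cT: "card ({1..p+q} - S) = q" using S c finS by (simp add: card_Diff_subset)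
  have ly: "length ys = q" unfolding ys_def using cT by simp
  have sx: "set xs = S" unfolding xs_def using finS by simp
  have sy: "set ys = {1..p+q} - S" unfolding ys_def by simp
  have dL: "distinct L" unfolding L_def xs_def ys_def using sx sy xs_def ys_def by auto
  have sL: "set L = {1..p+q}" unfolding L_def using sx sy S by auto
  have lL: "length L = p + q" unfolding L_def using lx ly by simp
  define z where "z = (\<lambda>i. if i \<in> {1..p+q} then L ! (i - 1) else i)"
  have bL: "bij_betw ((!) L) {..<p+q} {1..p+q}" using bij_betw_nth[OF dL] lL sL by simp
  have bsh: "bij_betw (\<lambda>i. i - 1) {1..p+q} {..<p+q}"
    by (rule bij_betw_byWitness[of _ Suc]) auto
  have "bij_betw ((!) L \<circ> (\<lambda>i. i - 1)) {1..p+q} {1..p+q}" by (rule bij_betw_trans[OF bsh bL])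
  then have bz: "bij_betw z {1..p+q} {1..p+q}"
    by (rule bij_betw_cong[THEN iffD1, rotated]) (simp add: z_def)
  have perm: "z permutes {1..p+q}" by (rule bij_imp_permutes[OF bz]) (auto simp: z_def)
  have zx: "z i = xs ! (i - 1)" if "1 \<le> i" "i \<le> p" for i
    using that lx unfolding z_def L_def by (auto simp: nth_append)
  have zy: "z i = ys ! (i - 1 - p)" if "p < i" "i \<le> p + q" for i
    using that lx unfolding z_def L_def by (auto simp: nth_append)
  have i1: "z i < z j" if "1 \<le> i" "i < j" "j \<le> p" for i j
    using zx[of i] zx[of j] that sorted_wrt_nth_less[OF strict_sorted_list_of_set[of S], of "i - 1" "j - 1"] lx
    unfolding xs_def by simp
  have i2: "z i < z j" if "p < i" "i < j" "j \<le> p + q" for i j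
    using zy[of i] zy[of j] that sorted_wrt_nth_less[OF strict_sorted_list_of_set[of "{1..p+q} - S"], of "i - 1 - p" "j - 1 - p"] ly
    unfolding ys_def by simp
  have zin: "z \<in> shuffles p q" unfolding shuffles_def using perm i1 i2 by blast
  have "z ` {0<..0+p} = (\<lambda>i. xs ! i) ` {..<p}"
  proof (intro set_eqI iffI)
    fix x assume "x \<in> z ` {0<..0+p}"
    then obtain i where "0 < i" "i \<le> p" "x = z i" by auto
    then show "x \<in> (\<lambda>i. xs ! i) ` {..<p}" using zx[of i] by (intro image_eqI[of _ _ "i - 1"]) auto
  next
    fix x assume "x \<in> (\<lambda>i. xs ! i) ` {..<p}"
    then obtain i where "i < p" "x = xs ! i" by auto
    then show "x \<in> z ` {0<..0+p}" using zx[of "Suc i"] by (intro image_eqI[of _ _ "Suc i"]) auto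
  qed
  also have "\<dots> = set xs" using lx by (auto simp: set_conv_nth)
  finally show ?thesis using zin sx by blast
qed



lemma Qs_empty: "Qs R {} = {}" unfolding Qs_def by auto

lemma Qs_card:
  assumes X: "X \<subseteq> {1..n}" and ne: "X \<noteq> {}"
  shows "card X \<in> Qs R X \<and> (\<forall>x\<in>Qs R X. x \<le> card X)"
proof -
  have fin: "finite X" using X finite_subset by blast
  define m where "m = Max X"
  have m: "m \<in> X" "\<And>x. x \<in> X \<Longrightarrow> x \<le> m" using fin ne unfolding m_def by auto
  have "X \<inter> {1..m} = X" using m X by auto
  moreover have "Suc m \<notin> X" using m(2) by fastforce
  ultimately have "card X \<in> Qs R X" unfolding Qs_def using m(1)
    by (intro CollectI exI[of _ m]) simp
  moreover have "\<forall>x\<in>Qs R X. x \<le> card X" unfolding Qs_def using fin by (auto intro: card_mono)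
  ultimately show ?thesis by blast
qed

lemma SS_card:
  assumes "S \<in> SS p q R J K" "J \<subseteq> {1..<p}" "1 \<le> p"
  shows "card S = p"
proof -
  have S: "S \<subseteq> {1..p+q}" and Q: "Qs (insert (p+q) R) S = insert p J" using assms(1) unfolding SS_def by auto
  have "S \<noteq> {}" using Q Qs_empty by auto
  then have c: "card S \<in> Qs (insert (p+q) R) S" "\<forall>x\<in>Qs (insert (p+q) R) S. x \<le> card S"
    using Qs_card[OF S] by auto
  have "card S \<le> p" using c(1) Q assms(2) by auto
  moreover have "p \<le> card S" using c(2) Q by auto
  ultimately show ?thesis by simp
qed

lemma card_Z_SS:
  assumes p1: "1 \<le> p" and q1: "1 \<le> q" and J: "J \<subseteq> {1..<p}" and K: "K \<subseteq> {1..<q}" and R: "R \<subseteq> {1..<p+q}"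
  shows "card {z \<in> shuffles p q. greatest_is p q z R J K} = card (SS p q R J K)"
proof (rule bij_betw_same_card)
  show "bij_betw (\<lambda>z. z ` {0<..0+p}) {z \<in> shuffles p q. greatest_is p q z R J K} (SS p q R J K)"
    unfolding bij_betw_def
  proof
    show "inj_on (\<lambda>z. z ` {0<..0+p}) {z \<in> shuffles p q. greatest_is p q z R J K}"
    proof (rule inj_onI)
      fix z z' assume "z \<in> {z \<in> shuffles p q. greatest_is p q z R J K}" "z' \<in> {z \<in> shuffles p q. greatest_is p q z R J K}"
        "z ` {0<..0+p} = z' ` {0<..0+p}"
      then show "z = z'" using shuf_inj[OF _ _ p1 q1, of z z'] by blast
    qed
  next
    show "(\<lambda>z. z ` {0<..0+p}) ` {z \<in> shuffles p q. greatest_is p q z R J K} = SS p q R J K"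
    proof (intro set_eqI iffI)
      fix S assume "S \<in> (\<lambda>z. z ` {0<..0+p}) ` {z \<in> shuffles p q. greatest_is p q z R J K}"
      then obtain z where z: "z \<in> shuffles p q" "greatest_is p q z R J K" "S = z ` {0<..0+p}" by auto
      interpret A: shuf p q z using z p1 q1 by unfold_locales
      show "S \<in> SS p q R J K" using A.SS_char[OF J K R] z unfolding A.S_def by simp
    next
      fix S assume S: "S \<in> SS p q R J K"
      have "S \<subseteq> {1..p+q}" using S unfolding SS_def by auto
      moreover have "card S = p" using SS_card[OF S J p1] .
      ultimately obtain z where z: "z \<in> shuffles p q" "z ` {0<..0+p} = S" using shuf_exists by blast
      interpret A: shuf p q z using z p1 q1 by unfold_locales
      have "greatest_is p q z R J K" using A.SS_char[OF J K R] z S unfolding A.S_def by simp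
      then show "S \<in> (\<lambda>z. z ` {0<..0+p}) ` {z \<in> shuffles p q. greatest_is p q z R J K}"
        using z by blast
    qed
  qed
qed

lemma card_A_SS:
  assumes zN: "\<forall>i\<ge>N. e i = 0" and n: "cum e N = p + q" and Pe: "Ps e = insert (p+q) R"
    and R: "R \<subseteq> {1..<p+q}"
  shows "card {a. (\<forall>i. a i \<le> e i) \<and> Ps a = insert p J \<and> Ps (\<lambda>i. e i - a i) = insert q K}
       = card (SS p q R J K)"
proof (rule bij_betw_same_card)
  let ?A = "{a. (\<forall>i. a i \<le> e i) \<and> Ps a = insert p J \<and> Ps (\<lambda>i. e i - a i) = insert q K}"
  have z0: "\<forall>j. (0::nat) \<le> a j" for a :: "nat \<Rightarrow> nat" by simp
  have ee: "\<forall>j. e j \<le> e j" by simp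
  have Qa: "Qs (insert (p+q) R) (Seg e (\<lambda>_. 0) a) = Ps a" if "\<forall>i. a i \<le> e i" for a
    using Qs_seg[OF that z0] Pe by simp
  have Qb: "Qs (insert (p+q) R) ({1..p+q} - Seg e (\<lambda>_. 0) a) = Ps (\<lambda>i. e i - a i)" if a: "\<forall>i. a i \<le> e i" for a
    using Qs_seg[OF ee a] Pe seg_compl[OF a zN] n by simp
  have cnd: "m \<in> R" if a: "\<forall>i. a i \<le> e i" and "1 \<le> m" "m < p + q" "m \<notin> Seg e (\<lambda>_. 0) a"
     "Suc m \<in> Seg e (\<lambda>_. 0) a" for a m
    using seg_cond[OF a that(2,4,5)] Pe that(3) by auto
  show "bij_betw (\<lambda>a. Seg e (\<lambda>_. 0) a) ?A (SS p q R J K)"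
    unfolding bij_betw_def
  proof
    show "inj_on (\<lambda>a. Seg e (\<lambda>_. 0) a) ?A"
    proof (rule inj_onI)
      fix a b assume "a \<in> ?A" "b \<in> ?A" "Seg e (\<lambda>_. 0) a = Seg e (\<lambda>_. 0) b"
      then show "a = b" using seg_inj[of a e b] by blast
    qed
  next
    show "(\<lambda>a. Seg e (\<lambda>_. 0) a) ` ?A = SS p q R J K"
    proof (intro set_eqI iffI)
      fix S assume "S \<in> (\<lambda>a. Seg e (\<lambda>_. 0) a) ` ?A"
      then obtain a where a: "\<forall>i. a i \<le> e i" "Ps a = insert p J" "Ps (\<lambda>i. e i - a i) = insert q K"
        and S: "S = Seg e (\<lambda>_. 0) a" by auto
      have "S \<subseteq> {1..p+q}" using seg_sub[OF a(1) zN, of "\<lambda>_. 0"] n S by simp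
      moreover have "\<forall>m. 1 \<le> m \<longrightarrow> m < p+q \<longrightarrow> m \<notin> S \<longrightarrow> Suc m \<in> S \<longrightarrow> m \<in> R"
        using cnd[OF a(1)] S by blast
      moreover have "Qs (insert (p+q) R) S = insert p J" using Qa[OF a(1)] a(2) S by simp
      moreover have "Qs (insert (p+q) R) ({1..p+q} - S) = insert q K" using Qb[OF a(1)] a(3) S by simp
      ultimately show "S \<in> SS p q R J K" unfolding SS_def by blast
    next
      fix S assume S: "S \<in> SS p q R J K"
      have S1: "S \<subseteq> {1..cum e N}" using S n unfolding SS_def by auto
      have c0: "\<forall>m. 1 \<le> m \<longrightarrow> m < p+q \<longrightarrow> m \<notin> S \<longrightarrow> Suc m \<in> S \<longrightarrow> m \<in> R"
        using S unfolding SS_def by blast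
      have c: "\<forall>m. 1 \<le> m \<longrightarrow> m < cum e N \<longrightarrow> m \<notin> S \<longrightarrow> Suc m \<in> S \<longrightarrow> m \<in> Ps e"
      proof (intro allI impI)
        fix m assume "1 \<le> m" "m < cum e N" "m \<notin> S" "Suc m \<in> S"
        then have "m \<in> R" using c0 n by simp
        then show "m \<in> Ps e" using Pe by simp
      qed
      define a where "a = (\<lambda>i. card (S \<inter> {cum e i<..cum e (Suc i)}))"
      have a: "\<forall>i. a i \<le> e i" "Seg e (\<lambda>_. 0) a = S"
        using seg_surj[OF zN S1 c] unfolding a_def by auto
      have "Qs (insert (p+q) R) S = insert p J" "Qs (insert (p+q) R) ({1..p+q} - S) = insert q K"
        using S unfolding SS_def by blast+
      then have "Ps a = insert p J" "Ps (\<lambda>i. e i - a i) = insert q K"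
        using Qa[OF a(1)] Qb[OF a(1)] a(2) by simp_all
      then show "S \<in> (\<lambda>a. Seg e (\<lambda>_. 0) a) ` ?A" using a by blast
    qed
  qed
qed



fun psums :: "nat \<Rightarrow> nat list \<Rightarrow> nat list" where
  "psums acc [] = []"
| "psums acc (v # vs) = (acc + v) # psums (acc + v) vs"

fun diffs :: "nat \<Rightarrow> nat list \<Rightarrow> nat list" where
  "diffs acc [] = []"
| "diffs acc (y # ys) = (y - acc) # diffs y ys"

lemma zip_diffs: "map (\<lambda>(a, b). b - a) (zip (acc # ys) ys) = diffs acc ys"
  by (induction ys arbitrary: acc) auto

lemma compo_diffs: "compo n J = diffs 0 (sorted_list_of_set J @ [n])"
  unfolding compo_def Let_def using zip_diffs[of 0 "sorted_list_of_set J @ [n]"] by simp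

lemma diffs_psums: "diffs acc (psums acc vs) = vs"
  by (induction vs arbitrary: acc) auto

lemma psums_diffs: "sorted (acc # ys) \<Longrightarrow> psums acc (diffs acc ys) = ys"
  by (induction ys arbitrary: acc) auto

lemma diffs_iff: "sorted (acc # ys) \<Longrightarrow> vs = diffs acc ys \<longleftrightarrow> psums acc vs = ys"
  using diffs_psums psums_diffs by metis

lemma cum_upd: "cum (e(x := 0)) k + (if x < k then e x else 0) = cum e k"
  by (induction k) (auto simp: less_Suc_eq)

lemma cum_zero: "\<forall>j<x. e j = 0 \<Longrightarrow> cum e x = 0"
  by (simp add: cum_def)

lemma psums_cum:
  "sorted_wrt (<) xs \<Longrightarrow> (\<forall>i. e i \<noteq> 0 \<longleftrightarrow> i \<in> set xs) \<Longrightarrow>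
   psums acc (map e xs) = map (\<lambda>i. acc + cum e (Suc i)) xs"
proof (induction xs arbitrary: e acc)
  case Nil then show ?case by simp
next
  case (Cons x xs)
  define e' where "e' = e(x := 0)"
  have xs: "\<forall>y\<in>set xs. x < y" "sorted_wrt (<) xs" using Cons.prems(1) by auto
  have h1: "\<forall>i. e' i \<noteq> 0 \<longleftrightarrow> i \<in> set xs"
    using Cons.prems(2) xs(1) unfolding e'_def by auto
  have me: "map e xs = map e' xs" unfolding e'_def using xs(1) by auto
  have IH: "psums (acc + e x) (map e' xs) = map (\<lambda>i. acc + e x + cum e' (Suc i)) xs"
    using Cons.IH[OF xs(2) h1] .
  have "\<forall>j<x. e j = 0" using Cons.prems(2) xs(1) by fastforce
  then have c0: "cum e (Suc x) = e x" using cum_zero[of x e] by simp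
  have c1: "cum e (Suc i) = e x + cum e' (Suc i)" if "i \<in> set xs" for i
    using cum_upd[of e x "Suc i"] xs(1) that unfolding e'_def by (auto simp del: cum_Suc)
  have mm: "map (\<lambda>i. acc + cum e (Suc i)) xs = map (\<lambda>i. acc + e x + cum e' (Suc i)) xs"
    using c1 by (simp del: cum_Suc)
  show ?case by (simp only: list.map psums.simps me IH mm c0)
qed

lemma M_iff:
  assumes fin: "finite {i. e i \<noteq> 0}" and J: "J \<subseteq> {1..<n}"
  shows "M J n e = (if Ps e = insert n J then 1 else 0)"
proof -
  define xs where "xs = sorted_list_of_set {i. e i \<noteq> 0}"
  define ps where "ps = sorted_list_of_set J @ [n]"
  have finJ: "finite J" using J finite_subset by blast
  have sx: "sorted_wrt (<) xs" unfolding xs_def by simp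
  have setx: "\<forall>i. e i \<noteq> 0 \<longleftrightarrow> i \<in> set xs" unfolding xs_def using fin by simp
  have sps: "sorted_wrt (<) ps" unfolding ps_def using finJ J
    by (auto simp: sorted_wrt_append)
  have sps0: "sorted (0 # ps)" using sps unfolding ps_def by (auto simp: sorted_wrt_append strict_sorted_iff)
  have setps: "set ps = insert n J" unfolding ps_def using finJ by auto
  define Ls where "Ls = map (\<lambda>i. cum e (Suc i)) xs"
  have sL: "sorted_wrt (<) Ls"
  proof -
    have "sorted_wrt (\<lambda>i j. cum e (Suc i) < cum e (Suc j)) xs"
    proof (rule sorted_wrt_mono_rel[OF _ sx])
      fix i j assume "i \<in> set xs" "j \<in> set xs" "i < j"
      then have "cum e (Suc i) \<le> cum e j" "e j \<noteq> 0" using setx cum_mono[of "Suc i" j e] by auto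
      then show "cum e (Suc i) < cum e (Suc j)" by simp
    qed
    then show ?thesis unfolding Ls_def by (simp add: sorted_wrt_map)
  qed
  have setL: "set Ls = Ps e" unfolding Ls_def Ps_def using setx by auto
  have ps_eq: "psums 0 (map e xs) = Ls" unfolding Ls_def using psums_cum[OF sx setx, of 0] by simp
  have "map e xs = compo n J \<longleftrightarrow> Ls = ps"
    unfolding compo_diffs ps_def[symmetric] diffs_iff[OF sps0] ps_eq ..
  also have "\<dots> \<longleftrightarrow> set Ls = set ps"
    using sorted_distinct_set_unique[of Ls ps] sL sps by (auto simp: strict_sorted_iff)
  finally show ?thesis unfolding M_def xs_def[symmetric] setL setps by simp
qed

lemma finite_bounded_funs:
  fixes e :: "nat \<Rightarrow> nat"
  assumes fin: "finite {i. e i \<noteq> 0}"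
  shows "finite {a. \<forall>i. a i \<le> (e i :: nat)}"
proof -
  obtain B where B: "\<forall>i\<in>{i. e i \<noteq> 0}. i < B" using fin finite_nat_set_iff_bounded by blast
  define V where "V = Max (insert 0 (e ` {..<B}))"
  have "{a. \<forall>i. a i \<le> e i} \<subseteq> {f. \<forall>x. (x \<in> {..<B} \<longrightarrow> f x \<in> {..V}) \<and> (x \<notin> {..<B} \<longrightarrow> f x = 0)}"
  proof
    fix a assume a: "a \<in> {a. \<forall>i. a i \<le> e i}"
    have "a x \<le> V" if "x < B" for x
    proof -
      have "e x \<le> V" unfolding V_def using that by (intro Max_ge) auto
      moreover have "a x \<le> e x" using a by simp
      ultimately show ?thesis by linarith
    qed
    moreover have "a x = 0" if "\<not> x < B" for x
    proof -
      have "e x = 0" using B that by auto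
      moreover have "a x \<le> e x" using a by simp
      ultimately show ?thesis by simp
    qed
    ultimately show "a \<in> {f. \<forall>x. (x \<in> {..<B} \<longrightarrow> f x \<in> {..V}) \<and> (x \<notin> {..<B} \<longrightarrow> f x = 0)}" by auto
  qed
  then show ?thesis by (rule finite_subset) (rule finite_set_of_finite_funs; simp)
qed



lemma Ps_total:
  assumes z: "\<forall>i\<ge>N. f i = 0" and P: "Ps f = insert c X" and X: "X \<subseteq> {1..<c}" and c: "1 \<le> c"
  shows "cum f N = c"
proof -
  have "c \<in> Ps f" using P by simp
  then have le: "c \<le> cum f N" using Ps_le[OF z] by blast
  then have "cum f N \<in> Ps f" using c by (intro cum_in_Ps) simp
  then have "cum f N = c \<or> cum f N \<in> X" using P by simp
  then show ?thesis using X le by auto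
qed

lemma cum_split:
  assumes "\<forall>i. a i \<le> e i" shows "cum e k = cum a k + cum (\<lambda>i. e i - a i) k"
proof (induction k)
  case 0 then show ?case by simp
next
  case (Suc k)
  have "a k \<le> e k" using assms by auto
  then show ?case using Suc by simp
qed

theorem mainTheorem14:
  fixes p q :: nat and J K :: "nat set" and e :: "nat \<Rightarrow> nat"
  assumes "1 \<le> p" and "1 \<le> q" and "J \<subseteq> {1..<p}" and "K \<subseteq> {1..<q}"
    and "finite {i. e i \<noteq> 0}"
  shows "series_mult (M J p) (M K q) e =
     (\<Sum>R \<in> Pow {1..<p+q}.
        int (card {\<zeta> \<in> shuffles p q. greatest_is p q \<zeta> R J K}) * M R (p + q) e)"
proof -
  note p1 = assms(1) and q1 = assms(2) and J = assms(3) and K = assms(4) and fin = assms(5)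
  obtain N where "\<forall>i\<in>{i. e i \<noteq> 0}. i < N" using fin finite_nat_set_iff_bounded by blast
  then have zN: "\<forall>i\<ge>N. e i = 0" by (meson leD mem_Collect_eq)
  define A0 where "A0 = {a. \<forall>i. a i \<le> e i}"
  define AA where "AA = {a. (\<forall>i. a i \<le> e i) \<and> Ps a = insert p J \<and> Ps (\<lambda>i. e i - a i) = insert q K}"
  have finA0: "finite A0" unfolding A0_def by (rule finite_bounded_funs[OF fin])
  have fina: "finite {i. a i \<noteq> 0}" "finite {i. e i - a i \<noteq> 0}" if "a \<in> A0" for a
  proof -
    have ale: "a i \<le> e i" for i using that unfolding A0_def by simp
    have "{i. a i \<noteq> 0} \<subseteq> {i. e i \<noteq> 0}"
    proof
      fix i assume "i \<in> {i. a i \<noteq> 0}" then show "i \<in> {i. e i \<noteq> 0}" using ale[of i] by simp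
    qed
    moreover have "{i. e i - a i \<noteq> 0} \<subseteq> {i. e i \<noteq> 0}" by auto
    ultimately have "{i. a i \<noteq> 0} \<subseteq> {i. e i \<noteq> 0}" "{i. e i - a i \<noteq> 0} \<subseteq> {i. e i \<noteq> 0}" by blast+
    then show "finite {i. a i \<noteq> 0}" "finite {i. e i - a i \<noteq> 0}" using fin finite_subset by blast+
  qed
  have LHS: "series_mult (M J p) (M K q) e = int (card AA)"
  proof -
    have "series_mult (M J p) (M K q) e = (\<Sum>a\<in>A0. if a \<in> AA then 1 else 0)"
      unfolding series_mult_def A0_def[symmetric]
    proof (rule sum.cong[OF refl])
      fix a assume a: "a \<in> A0"
      show "M J p a * M K q (\<lambda>i. e i - a i) = (if a \<in> AA then 1 else 0)"
        using M_iff[OF fina(1)[OF a] J] M_iff[OF fina(2)[OF a] K] a unfolding AA_def A0_def by auto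
    qed
    also have "\<dots> = (\<Sum>a\<in>{a\<in>A0. a \<in> AA}. 1)" using sum.inter_filter[OF finA0, of "\<lambda>_. 1::int"] by simp
    also have "{a\<in>A0. a \<in> AA} = AA" unfolding A0_def AA_def by auto
    finally show ?thesis by simp
  qed
  show ?thesis
  proof (cases "\<exists>R0. R0 \<subseteq> {1..<p+q} \<and> Ps e = insert (p+q) R0")
    case True
    then obtain R0 where R0: "R0 \<subseteq> {1..<p+q}" "Ps e = insert (p+q) R0" by blast
    have MR: "M R (p+q) e = (if R = R0 then 1 else 0)" if "R \<in> Pow {1..<p+q}" for R
    proof -
      have nn: "p + q \<notin> R" "p + q \<notin> R0" using R0(1) that by auto
      have "Ps e = insert (p+q) R \<longleftrightarrow> insert (p+q) R = insert (p+q) R0" using R0(2) by auto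
      also have "\<dots> \<longleftrightarrow> R = R0" by (rule insert_ident[OF nn])
      finally have "Ps e = insert (p+q) R \<longleftrightarrow> R = R0" .
      then show ?thesis using M_iff[OF fin, of R "p+q"] that by auto
    qed
    have "(\<Sum>R \<in> Pow {1..<p+q}. int (card {\<zeta> \<in> shuffles p q. greatest_is p q \<zeta> R J K}) * M R (p + q) e)
        = (\<Sum>R \<in> Pow {1..<p+q}. if R = R0 then int (card {\<zeta> \<in> shuffles p q. greatest_is p q \<zeta> R J K}) else 0)"
      by (rule sum.cong[OF refl]) (simp add: MR)
    also have "\<dots> = int (card {\<zeta> \<in> shuffles p q. greatest_is p q \<zeta> R0 J K})"
      using R0(1) by (simp add: sum.delta)
    also have "card {\<zeta> \<in> shuffles p q. greatest_is p q \<zeta> R0 J K} = card (SS p q R0 J K)"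
      by (rule card_Z_SS[OF p1 q1 J K R0(1)])
    also have "\<dots> = card AA"
    proof -
      have n: "cum e N = p + q" using Ps_total[OF zN R0(2) R0(1)] p1 by simp
      show ?thesis unfolding AA_def using card_A_SS[OF zN n R0(2) R0(1), of J K] by simp
    qed
    finally show ?thesis using LHS by simp
  next
    case False
    have MR: "M R (p+q) e = 0" if "R \<in> Pow {1..<p+q}" for R
      using M_iff[OF fin, of R "p+q"] that False by auto
    have "AA = {}"
    proof (rule ccontr)
      assume "AA \<noteq> {}"
      then obtain a where a: "\<forall>i. a i \<le> e i" "Ps a = insert p J" "Ps (\<lambda>i. e i - a i) = insert q K"
        unfolding AA_def by auto
      have za: "\<forall>i\<ge>N. a i = 0"
      proof (intro allI impI)
        fix i assume "N \<le> i" then have "e i = 0" using zN by simp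
        then show "a i = 0" using a(1) by (metis le_zero_eq)
      qed
      have zb: "\<forall>i\<ge>N. e i - a i = 0" using zN by simp
      have ca: "cum a N = p" by (rule Ps_total[OF za a(2) J p1])
      have cb: "cum (\<lambda>i. e i - a i) N = q" by (rule Ps_total[OF zb a(3) K q1])
      have ce: "cum e N = p + q" using cum_split[OF a(1), of N] ca cb by simp
      have "p + q \<in> Ps e" using cum_in_Ps[of e N] ce p1 by simp
      moreover have "Ps e \<subseteq> {1..p+q}" using Ps_le[OF zN] ce by auto
      ultimately have "Ps e - {p+q} \<subseteq> {1..<p+q} \<and> Ps e = insert (p+q) (Ps e - {p+q})" by auto
      then show False using False by blast
    qed
    then show ?thesis using LHS MR by simp
  qed
qed


end
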